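(* Fix an integer $J\ge 1$, a non-decreasing function $\alpha:[0,1]\to(0,\infty)$, and real numbers (edge latencies) $\ell_1\le \ell_2\le\cdots\le \ell_J$, where the edges $j\in\{1,\dots,J\}$ are indexed in order of non-decreasing latency. Let $x_1,\dots,x_J\ge 0$ with $\sum_{j=1}^J x_j=1$ be a desired flow, and set $a_0=0$ and $a_j=\sum_{k=1}^{j}x_k$ for $j=1,\dots,J$ (so $a_J=1$). Consider the assignment $x:[0,1]\to\{1,\dots,J\}$ that routes the users $a\in[a_{j-1},a_j)$ (for $j<J$) and $a\in[a_{J-1},1]$ (for $j=J$) to edge $j$, so that edge $j$ carries flow $x_j$. Let $\tau_J\in\mathbb{R}$ be arbitrary and define, for every $j\in\{1,\dots,J\}$, $$\tau_j=\tau_J+\sum_{k=j}^{J-1}\frac{\ell_{k+1}-\ell_k}{\alpha(a_k)}.$$ Then $x$ is a Nash (equilibrium) flow for the instance $(\alpha,\ell,\tau)$: for every user $a\in[0,1]$ and every edge $j'\in\{1,\dots,J\}$, $$\ell_{x(a)}+\alpha(a)\,\tau_{x(a)}\;\le\;\ell_{j'}+\alpha(a)\,\tau_{j'}.$$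
   Context: Setting: a single source–sink pair connected by $J$ parallel edges (delivery modes). The population of users is the interval $[0,1]$ (nonatomic; each $a\in[0,1]$ is an infinitesimal user), and $\alpha(a)$ is user $a$'s trade-off between price and time. Edge $j$ has latency $\ell_j$ (the latency evaluated at the given flow; prices do not affect latencies) and price $\tau_j$. User $a$ evaluates edge $j$ by the cost $\ell_j+\alpha(a)\tau_j$. A flow $x:[0,1]\to\{1,\dots,J\}$ (Lebesgue measurable) is a Nash flow for $(\alpha,\ell,\tau)$ if every user is assigned to an edge minimizing its cost, i.e. $\ell_{x(a)}+\alpha(a)\tau_{x(a)}\le \ell_{j}+\alpha(a)\tau_{j}$ for all $a\in[0,1]$ and all edges $j$. *)

theory Defs
  imports "HOL-Analysis.Analysis"
begin

definition cum :: "(nat \<Rightarrow> real) \<Rightarrow> nat \<Rightarrow> real" where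
  "cum x j = (\<Sum>k=1..j. x k)"

definition route :: "nat \<Rightarrow> (nat \<Rightarrow> real) \<Rightarrow> real \<Rightarrow> nat" where
  "route J x a =
     (if \<exists>j\<in>{1..<J}. cum x (j - 1) \<le> a \<and> a < cum x j
      then (THE j. j \<in> {1..<J} \<and> cum x (j - 1) \<le> a \<and> a < cum x j)
      else J)"

definition price :: "nat \<Rightarrow> (real \<Rightarrow> real) \<Rightarrow> (nat \<Rightarrow> real) \<Rightarrow> (nat \<Rightarrow> real) \<Rightarrow> real \<Rightarrow> nat \<Rightarrow> real" where
  "price J \<alpha> l x tauJ j = tauJ + (\<Sum>k=j..J-1. (l (Suc k) - l k) / \<alpha> (cum x k))"

definition is_nash_flow ::
  "nat \<Rightarrow> (real \<Rightarrow> real) \<Rightarrow> (nat \<Rightarrow> real) \<Rightarrow> (nat \<Rightarrow> real) \<Rightarrow> (real \<Rightarrow> nat) \<Rightarrow> bool" where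
  "is_nash_flow J \<alpha> l \<tau> f \<longleftrightarrow>
     (\<forall>a\<in>{0..1}. f a \<in> {1..J} \<and>
        (\<forall>j'\<in>{1..J}. l (f a) + \<alpha> a * \<tau> (f a) \<le> l j' + \<alpha> a * \<tau> j'))"

end

theory Submission
  imports Defs
begin

lemma cum_Suc: "cum x (Suc m) = cum x m + x (Suc m)"
  unfolding cum_def by (simp add: sum.cl_ivl_Suc)

lemma cum_0: "cum x 0 = 0" unfolding cum_def by simp

lemma cum_mono:
  assumes "\<forall>j\<in>{1..J}. x j \<ge> 0" "k \<le> m" "m \<le> J"
  shows "cum x k \<le> cum x m"
  using assms(2,3)
proof (induction m)
  case 0 then show ?case by simp
next
  case (Suc m)
  show ?case
  proof (cases "k = Suc m")
    case True then show ?thesis by simp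
  next
    case False
    then have "cum x k \<le> cum x m" using Suc by simp
    moreover have "x (Suc m) \<ge> 0" using assms(1) Suc.prems by auto
    ultimately show ?thesis by (simp add: cum_Suc)
  qed
qed

lemma keyA:
  fixes l w :: "nat \<Rightarrow> real" and c t :: real
  assumes "i \<le> j" "j \<le> J" "c > 0"
    "\<forall>k. i \<le> k \<and> k < j \<longrightarrow> c \<le> w k \<and> 0 < w k \<and> l k \<le> l (Suc k)"
  shows "l i + c * (t + (\<Sum>k=i..<J. (l (Suc k) - l k)/w k))
       \<le> l j + c * (t + (\<Sum>k=j..<J. (l (Suc k) - l k)/w k))"
proof -
  have split: "(\<Sum>k=i..<J. (l (Suc k) - l k)/w k) = (\<Sum>k=i..<j. (l (Suc k) - l k)/w k) + (\<Sum>k=j..<J. (l (Suc k) - l k)/w k)"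
    by (rule sum.atLeastLessThan_concat[OF assms(1,2), symmetric])
  have tel: "(\<Sum>k=i..<j. l (Suc k) - l k) = l j - l i" by (rule sum_Suc_diff'[OF assms(1)])
  have "c * (\<Sum>k=i..<j. (l (Suc k) - l k)/w k) = (\<Sum>k=i..<j. c * ((l (Suc k) - l k)/w k))"
    by (simp add: sum_distrib_left)
  also have "\<dots> \<le> (\<Sum>k=i..<j. l (Suc k) - l k)"
  proof (rule sum_mono)
    fix k assume "k \<in> {i..<j}"
    then have h: "c \<le> w k" "0 < w k" "l k \<le> l (Suc k)" using assms(4) by auto
    have "c * ((l (Suc k) - l k)/w k) = (c / w k) * (l (Suc k) - l k)" by simp
    also have "\<dots> \<le> 1 * (l (Suc k) - l k)"
      by (rule mult_right_mono) (use h in auto)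
    finally show "c * ((l (Suc k) - l k)/w k) \<le> l (Suc k) - l k" by simp
  qed
  finally show ?thesis using split tel by (simp add: algebra_simps)
qed

lemma keyB:
  fixes l w :: "nat \<Rightarrow> real" and c t :: real
  assumes "j \<le> i" "i \<le> J" "c > 0"
    "\<forall>k. j \<le> k \<and> k < i \<longrightarrow> w k \<le> c \<and> 0 < w k \<and> l k \<le> l (Suc k)"
  shows "l i + c * (t + (\<Sum>k=i..<J. (l (Suc k) - l k)/w k))
       \<le> l j + c * (t + (\<Sum>k=j..<J. (l (Suc k) - l k)/w k))"
proof -
  have split: "(\<Sum>k=j..<J. (l (Suc k) - l k)/w k) = (\<Sum>k=j..<i. (l (Suc k) - l k)/w k) + (\<Sum>k=i..<J. (l (Suc k) - l k)/w k)"
    by (rule sum.atLeastLessThan_concat[OF assms(1,2), symmetric])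
  have tel: "(\<Sum>k=j..<i. l (Suc k) - l k) = l i - l j" by (rule sum_Suc_diff'[OF assms(1)])
  have "(\<Sum>k=j..<i. l (Suc k) - l k) \<le> (\<Sum>k=j..<i. c * ((l (Suc k) - l k)/w k))"
  proof (rule sum_mono)
    fix k assume "k \<in> {j..<i}"
    then have h: "w k \<le> c" "0 < w k" "l k \<le> l (Suc k)" using assms(4) by auto
    have "1 * (l (Suc k) - l k) \<le> (c / w k) * (l (Suc k) - l k)"
      by (rule mult_right_mono) (use h in auto)
    then show "l (Suc k) - l k \<le> c * ((l (Suc k) - l k)/w k)" by simp
  qed
  also have "\<dots> = c * (\<Sum>k=j..<i. (l (Suc k) - l k)/w k)"
    by (simp add: sum_distrib_left)
  finally show ?thesis using split tel by (simp add: algebra_simps)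
qed

theorem theorem1:
  fixes J :: nat and \<alpha> :: "real \<Rightarrow> real" and l :: "nat \<Rightarrow> real"
    and x :: "nat \<Rightarrow> real" and tauJ :: real
  assumes "J \<ge> 1"
    and "mono_on {0..1} \<alpha>"
    and "\<forall>a\<in>{0..1}. \<alpha> a > 0"
    and "\<forall>j\<in>{1..J}. \<forall>k\<in>{1..J}. j \<le> k \<longrightarrow> l j \<le> l k"
    and "\<forall>j\<in>{1..J}. x j \<ge> 0"
    and "(\<Sum>j=1..J. x j) = 1"
  shows "is_nash_flow J \<alpha> l (price J \<alpha> l x tauJ) (route J x)"
proof -
  have cm: "\<And>k m. k \<le> m \<Longrightarrow> m \<le> J \<Longrightarrow> cum x k \<le> cum x m"
    using cum_mono[OF assms(5)] by blast
  have cJ: "cum x J = 1" using assms(6) by (simp add: cum_def)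
  have crange: "\<And>k. k \<le> J \<Longrightarrow> cum x k \<in> {0..1}"
  proof -
    fix k assume "k \<le> J"
    then have "cum x 0 \<le> cum x k" "cum x k \<le> cum x J" using cm by auto
    then show "cum x k \<in> {0..1}" using cJ cum_0[of x] by simp
  qed
  have pr: "\<And>j. price J \<alpha> l x tauJ j = tauJ + (\<Sum>k=j..<J. (l (Suc k) - l k) / \<alpha> (cum x k))"
    unfolding price_def using assms(1)
    by (metis One_nat_def Suc_pred atLeastLessThanSuc_atLeastAtMost less_eq_Suc_le)
  show ?thesis unfolding is_nash_flow_def
  proof
    fix a :: real assume a: "a \<in> {0..1}"
    have "\<exists>i. route J x a = i \<and> i \<in> {1..J} \<and> cum x (i - 1) \<le> a \<and> (i < J \<longrightarrow> a < cum x i)"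
    proof (cases "\<exists>j\<in>{1..<J}. cum x (j - 1) \<le> a \<and> a < cum x j")
      case True
      then obtain j where j: "j\<in>{1..<J}" "cum x (j - 1) \<le> a" "a < cum x j" by blast
      have uniq: "j2 = j" if "j2 \<in> {1..<J} \<and> cum x (j2 - 1) \<le> a \<and> a < cum x j2" for j2
      proof (rule ccontr)
        assume "j2 \<noteq> j"
        then consider "j2 < j" | "j < j2" by linarith
        then show False
        proof cases
          case 1 then have "cum x j2 \<le> cum x (j - 1)" using cm j(1) by auto
          then show ?thesis using that j by linarith
        next
          case 2 then have "cum x j \<le> cum x (j2 - 1)" using cm that by auto
          then show ?thesis using that j by linarith
        qed
      qed
      have "(THE j. j \<in> {1..<J} \<and> cum x (j - 1) \<le> a \<and> a < cum x j) = j"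
        by (rule the_equality) (use j uniq in auto)
      then have "route J x a = j" unfolding route_def using True by simp
      then show ?thesis using j by auto
    next
      case False
      have "cum x (J - 1) \<le> a"
      proof (rule ccontr)
        assume "\<not> cum x (J - 1) \<le> a"
        then have ex: "\<exists>m. a < cum x m \<and> m \<le> J - 1" by (intro exI[of _ "J - 1"]) auto
        define m where "m = (LEAST m. a < cum x m \<and> m \<le> J - 1)"
        have m1: "a < cum x m \<and> m \<le> J - 1" using LeastI_ex[OF ex] m_def by simp
        have m0: "m \<noteq> 0" using m1 a cum_0[of x] by (metis atLeastAtMost_iff not_less)
        have "\<not> (a < cum x (m - 1) \<and> m - 1 \<le> J - 1)"
          using not_less_Least[of "m - 1" "\<lambda>m. a < cum x m \<and> m \<le> J - 1"] m0 m_def by auto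
        then have "cum x (m - 1) \<le> a" using m1 by auto
        then show False using False m1 m0 assms(1) by force
      qed
      moreover have "route J x a = J" unfolding route_def using False by (simp only: if_False)
      ultimately show ?thesis using assms(1) by auto
    qed
    then obtain i where i: "route J x a = i" "i \<in> {1..J}" "cum x (i - 1) \<le> a" "i < J \<longrightarrow> a < cum x i"
      by blast
    have ca: "\<alpha> a > 0" using assms(3) a by auto
    have lm: "\<And>k. 1 \<le> k \<Longrightarrow> k < J \<Longrightarrow> l k \<le> l (Suc k)" using assms(4) by auto
    have wpos: "\<And>k. k \<le> J \<Longrightarrow> 0 < \<alpha> (cum x k)" using assms(3) crange by auto
    show "route J x a \<in> {1..J} \<and> (\<forall>j'\<in>{1..J}. l (route J x a) + \<alpha> a * price J \<alpha> l x tauJ (route J x a)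
             \<le> l j' + \<alpha> a * price J \<alpha> l x tauJ j')"
    proof (intro conjI ballI)
      show "route J x a \<in> {1..J}" using i by simp
      fix j' assume j': "j' \<in> {1..J}"
      show "l (route J x a) + \<alpha> a * price J \<alpha> l x tauJ (route J x a) \<le> l j' + \<alpha> a * price J \<alpha> l x tauJ j'"
        unfolding i(1) pr
      proof (cases "i \<le> j'")
        case True
        show "l i + \<alpha> a * (tauJ + (\<Sum>k = i..<J. (l (Suc k) - l k) / \<alpha> (cum x k)))
            \<le> l j' + \<alpha> a * (tauJ + (\<Sum>k = j'..<J. (l (Suc k) - l k) / \<alpha> (cum x k)))"
        proof (rule keyA[OF True _ ca])
          show "j' \<le> J" using j' by simp
          show "\<forall>k. i \<le> k \<and> k < j' \<longrightarrow> \<alpha> a \<le> \<alpha> (cum x k) \<and> 0 < \<alpha> (cum x k) \<and> l k \<le> l (Suc k)"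
          proof (intro allI impI conjI)
            fix k assume k: "i \<le> k \<and> k < j'"
            then have "i < J" using j' by auto
            then have "a \<le> cum x k" using i(4) cm[of i k] k j' by force
            then show "\<alpha> a \<le> \<alpha> (cum x k)"
              using assms(2) a crange[of k] k j' by (auto intro: mono_onD)
            show "0 < \<alpha> (cum x k)" using wpos k j' by auto
            show "l k \<le> l (Suc k)" using lm k j' i(2) by auto
          qed
        qed
      next
        case False
        show "l i + \<alpha> a * (tauJ + (\<Sum>k = i..<J. (l (Suc k) - l k) / \<alpha> (cum x k)))
            \<le> l j' + \<alpha> a * (tauJ + (\<Sum>k = j'..<J. (l (Suc k) - l k) / \<alpha> (cum x k)))"
        proof (rule keyB[OF _ _ ca])
          show "j' \<le> i" using False by simp
          show "i \<le> J" using i by simp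
          show "\<forall>k. j' \<le> k \<and> k < i \<longrightarrow> \<alpha> (cum x k) \<le> \<alpha> a \<and> 0 < \<alpha> (cum x k) \<and> l k \<le> l (Suc k)"
          proof (intro allI impI conjI)
            fix k assume k: "j' \<le> k \<and> k < i"
            then have "cum x k \<le> a" using i(2,3) cm[of k "i - 1"] by force
            then show "\<alpha> (cum x k) \<le> \<alpha> a"
              using assms(2) a crange[of k] k i(2) by (auto intro: mono_onD)
            show "0 < \<alpha> (cum x k)" using wpos k i(2) by auto
            show "l k \<le> l (Suc k)" using lm k j' i(2) by auto
          qed
        qed
      qed
    qed
  qed
qed

end
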